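(* Let $q$ be a prime power, $e\ge 2$, $\ell=q^{e-1}+\cdots+q+1$, and let $h$ be a positive integer and $r$ an integer. Then $r(q^h-1)-q+1\equiv 0\pmod{q^e-1}$ if and only if $\gcd(h,e)=1$ and $r\equiv s\ell+\sum_{i=0}^{k-1}q^{hi}\pmod{q^e-1}$ for some integer $s$, where $k$ is a positive integer whose reduction modulo $e$ is the inverse of $h$ modulo $e$. *)

theory Defs
  imports "HOL-Number_Theory.Number_Theory"
begin

end

theory Submission
  imports Defs
begin

lemma pow_sub1_dvd:
  fixes x :: int
  shows "x ^ d - 1 dvd x ^ (d * j) - 1"
proof -
  have "x ^ (d * j) - 1 = (x ^ d) ^ j - 1" by (simp add: power_mult)
  also have "\<dots> = (x ^ d - 1) * (\<Sum>i<j. (x ^ d) ^ i)" by (rule power_diff_1_eq)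
  finally show ?thesis by simp
qed

lemma key_F2:
  fixes Q :: int and h e k :: nat
  assumes "e \<ge> 2" "[k * h = 1] (mod e)"
  shows "(Q ^ e - 1) dvd (Q ^ h - 1) * (\<Sum>i<k. Q ^ (h * i)) - (Q - 1)"
proof -
  have m: "k * h mod e = 1" using assms by (simp add: cong_def)
  define t where "t = k * h div e"
  have kh: "k * h = e * t + 1" using m t_def div_mult_mod_eq[of "k * h" e] by (simp add: mult.commute)
  have "(Q ^ h - 1) * (\<Sum>i<k. Q ^ (h * i)) = (Q ^ h - 1) * (\<Sum>i<k. (Q ^ h) ^ i)"
    by (simp add: power_mult)
  also have "\<dots> = (Q ^ h) ^ k - 1" by (simp add: power_diff_1_eq)
  also have "\<dots> = Q ^ (k * h) - 1" by (simp add: power_mult[symmetric] mult.commute)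
  also have "\<dots> = Q * Q ^ (e * t)  - 1" unfolding kh by simp
  finally have "(Q ^ h - 1) * (\<Sum>i<k. Q ^ (h * i)) - (Q - 1) = Q * (Q ^ (e * t) - 1)"
    by (simp add: algebra_simps)
  moreover have "(Q ^ e - 1) dvd Q * (Q ^ (e * t) - 1)"
    using pow_sub1_dvd by (rule dvd_mult)
  ultimately show ?thesis by simp
qed

theorem lemma3p3:
  fixes q e h :: nat and r :: int and p m :: nat
  assumes "prime p" and "m \<ge> 1" and "q = p ^ m"
    and "e \<ge> 2" and "h > 0"
  defines "l \<equiv> (\<Sum>i<e. int q ^ i)"
  shows "[r * (int q ^ h - 1) - int q + 1 = 0] (mod (int q ^ e - 1)) \<longleftrightarrow>
           (coprime h e \<and>
            (\<forall>k::nat. k > 0 \<and> [k * h = 1] (mod e) \<longrightarrow>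
               (\<exists>s::int. [r = s * l + (\<Sum>i<k. int q ^ (h * i))] (mod (int q ^ e - 1)))))"
proof -
  define Q where "Q = int q"
  have p2: "p \<ge> 2" using assms(1) prime_ge_2_nat by blast
  have "p ^ 1 \<le> p ^ m" using assms(2) p2 by (intro power_increasing) auto
  hence "q \<ge> 2" using p2 assms(3) by simp
  hence Q2: "Q \<ge> 2" using Q_def by simp
  define T where "T = (\<Sum>j<h. Q ^ j)"
  have NT: "Q ^ e - 1 = (Q - 1) * l" unfolding l_def Q_def by (rule power_diff_1_eq)
  have HT: "Q ^ h - 1 = (Q - 1) * T" unfolding T_def by (rule power_diff_1_eq)
  have lhs: "[r * (int q ^ h - 1) - int q + 1 = 0] (mod (int q ^ e - 1)) \<longleftrightarrow>
      (Q ^ e - 1) dvd r * (Q ^ h - 1) - (Q - 1)"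
    by (simp add: cong_0_iff Q_def algebra_simps)
  have TS: "l dvd T * (\<Sum>i<k. Q ^ (h * i)) - 1" if "[k * h = 1] (mod e)" for k
  proof -
    have "(Q ^ e - 1) dvd (Q ^ h - 1) * (\<Sum>i<k. Q ^ (h * i)) - (Q - 1)"
      using key_F2 assms(4) that by blast
    moreover have "(Q ^ h - 1) * (\<Sum>i<k. Q ^ (h * i)) - (Q - 1) = (Q - 1) * (T * (\<Sum>i<k. Q ^ (h * i)) - 1)"
      unfolding HT by (simp add: algebra_simps)
    ultimately have "(Q - 1) * l dvd (Q - 1) * (T * (\<Sum>i<k. Q ^ (h * i)) - 1)"
      unfolding NT by simp
    thus ?thesis using Q2 by (subst (asm) dvd_times_left_cancel_iff) auto
  qed
  show ?thesis
    unfolding lhs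
  proof
    assume A: "(Q ^ e - 1) dvd r * (Q ^ h - 1) - (Q - 1)"
    have cop: "coprime h e"
    proof (rule ccontr)
      assume nc: "\<not> coprime h e"
      define d where "d = gcd h e"
      have "d \<noteq> 1" using nc unfolding d_def coprime_iff_gcd_eq_1 .
      moreover have "d \<noteq> 0" unfolding d_def using assms(4) by simp
      ultimately have d2: "d \<ge> 2" by simp
      obtain a where ha: "h = d * a" using gcd_dvd1[of h e] unfolding d_def by (rule dvdE)
      obtain b where eb: "e = d * b" using gcd_dvd2[of h e] unfolding d_def by (rule dvdE)
      have D1: "Q ^ d - 1 dvd Q ^ h - 1" using ha pow_sub1_dvd by simp
      have D2: "Q ^ d - 1 dvd Q ^ e - 1" using eb pow_sub1_dvd by simp
      have "Q ^ d - 1 dvd r * (Q ^ h - 1) - (Q - 1)" using dvd_trans[OF D2 A] .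
      moreover have "Q ^ d - 1 dvd r * (Q ^ h - 1)" using D1 by simp
      ultimately have "Q ^ d - 1 dvd r * (Q ^ h - 1) - (r * (Q ^ h - 1) - (Q - 1))" by (rule dvd_diff[rotated])
      hence "Q ^ d - 1 dvd Q - 1" by simp
      hence le: "Q ^ d - 1 \<le> Q - 1" using Q2 by (intro zdvd_imp_le) auto
      have "Q ^ 2 \<le> Q ^ d" using d2 Q2 by (intro power_increasing) auto
      moreover have "Q < Q ^ 2" using Q2 by (simp add: power2_eq_square)
      ultimately show False using le by simp
    qed
    show "coprime h e \<and> (\<forall>k. 0 < k \<and> [k * h = 1] (mod e) \<longrightarrow>
        (\<exists>s. [r = s * l + (\<Sum>i<k. int q ^ (h * i))] (mod int q ^ e - 1)))"
    proof (intro conjI cop allI impI)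
      fix k :: nat assume k: "0 < k \<and> [k * h = 1] (mod e)"
      define S where "S = (\<Sum>i<k. Q ^ (h * i))"
      have F2: "(Q ^ e - 1) dvd (Q ^ h - 1) * S - (Q - 1)"
        unfolding S_def using key_F2 assms(4) k by blast
      have "(Q ^ e - 1) dvd (r * (Q ^ h - 1) - (Q - 1)) - ((Q ^ h - 1) * S - (Q - 1))"
        using A F2 by (rule dvd_diff)
      moreover have "(r * (Q ^ h - 1) - (Q - 1)) - ((Q ^ h - 1) * S - (Q - 1)) = (Q - 1) * ((r - S) * T)"
        unfolding HT by (simp add: algebra_simps)
      ultimately have "(Q - 1) * l dvd (Q - 1) * ((r - S) * T)"
        unfolding NT by simp
      hence l1: "l dvd (r - S) * T" using Q2 by (subst (asm) dvd_times_left_cancel_iff) auto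
      have l2: "l dvd (r - S) * (T * S - 1)" using TS[of k] k unfolding S_def by simp
      have "l dvd (r - S) * T * S - (r - S) * (T * S - 1)"
        using l1 l2 by (simp add: dvd_diff)
      moreover have "(r - S) * T * S - (r - S) * (T * S - 1) = r - S" by (simp add: algebra_simps)
      ultimately have "l dvd r - S" by simp
      then obtain s where "r - S = l * s" by (metis dvdE)
      hence "r = s * l + S" by (simp add: algebra_simps)
      thus "\<exists>s. [r = s * l + (\<Sum>i<k. int q ^ (h * i))] (mod int q ^ e - 1)"
        unfolding S_def Q_def by (intro exI[of _ s]) simp
    qed
  next
    assume B: "coprime h e \<and> (\<forall>k. 0 < k \<and> [k * h = 1] (mod e) \<longrightarrow>
        (\<exists>s. [r = s * l + (\<Sum>i<k. int q ^ (h * i))] (mod int q ^ e - 1)))"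
    obtain k where kc: "[h * k = Suc 0] (mod e)" using B cong_solve_coprime_nat by blast
    have kc': "[k * h = 1] (mod e)" using kc by (simp add: mult.commute)
    have "k > 0"
    proof (rule ccontr)
      assume "\<not> k > 0"
      hence "[0 = 1] (mod e)" using kc' by simp
      thus False using assms(4) by (simp add: cong_def)
    qed
    then obtain s where s: "[r = s * l + (\<Sum>i<k. Q ^ (h * i))] (mod Q ^ e - 1)"
      using B kc' Q_def by blast
    define S where "S = (\<Sum>i<k. Q ^ (h * i))"
    have s': "(Q ^ e - 1) dvd r - s * l - S" using s unfolding S_def
      by (simp add: cong_iff_dvd_diff algebra_simps)
    have F2: "(Q ^ e - 1) dvd (Q ^ h - 1) * S - (Q - 1)"
      unfolding S_def using key_F2 assms(4) kc' by blast
    have "s * l * (Q ^ h - 1) = ((Q - 1) * l) * (s * T)"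
      unfolding HT by (simp add: algebra_simps)
    hence F3: "(Q ^ e - 1) dvd s * l * (Q ^ h - 1)"
      unfolding NT by (rule dvdI)
    have "(Q ^ e - 1) dvd (r - s * l - S) * (Q ^ h - 1) + s * l * (Q ^ h - 1) + ((Q ^ h - 1) * S - (Q - 1))"
      using s' F2 F3 by (metis dvd_add dvd_mult2)
    moreover have "(r - s * l - S) * (Q ^ h - 1) + s * l * (Q ^ h - 1) + ((Q ^ h - 1) * S - (Q - 1)) = r * (Q ^ h - 1) - (Q - 1)"
      by (simp add: algebra_simps)
    ultimately show "(Q ^ e - 1) dvd r * (Q ^ h - 1) - (Q - 1)" by simp
  qed
qed

end
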